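(* Let $n\geq1$ be an integer and $z\in\mathbb{C}$ with $|z|<1$. Put $p=(n+1)(1-|z|)$ and \[ m(p)=\begin{cases}(e\,p)^{-1}, & p\geq e^{-1},\\ |\log p|, & p<e^{-1}.\end{cases} \] Then $|R_n(z)|<m(p)$.
   Context: $R_n(z)=\sum_{k=n+1}^\infty \frac{z^k}{k}$, the tail of the Taylor series of $-\log(1-z)$. *)

theory Defs
  imports "HOL-Analysis.Analysis"
begin

text \<open>Tail of the Taylor series of -log(1-z): R_n(z) = sum over k > n of z^k / k.\<close>
definition R :: "nat \<Rightarrow> complex \<Rightarrow> complex" where
  "R n z = (\<Sum>j. z ^ (j + n + 1) / of_nat (j + n + 1))"

definition m_bound :: "real \<Rightarrow> real" where
  "m_bound p = (if p \<ge> exp (-1) then 1 / (exp 1 * p) else \<bar>ln p\<bar>)"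

end

theory Submission
  imports Defs
begin

lemma log_sums:
  fixes r :: real assumes "0 \<le> r" "r < 1"
  shows "(\<lambda>k. r ^ k / real k) sums (- ln (1 - r))"
proof -
  have "(\<lambda>k. - ((-(-r)) ^ k) / real k) sums ln (1 + - r)"
    using ln_series'[of "-r"] assms by simp
  then have "(\<lambda>k. - (- ((-(-r)) ^ k) / real k)) sums (- ln (1 + - r))"
    by (rule sums_minus)
  then show ?thesis by simp
qed

lemma tail_sums:
  fixes r :: real assumes "0 \<le> r" "r < 1"
  shows "(\<lambda>j. r ^ (j + n + 1) / real (j + n + 1)) sums (- ln (1 - r) - (\<Sum>k<n+1. r ^ k / real k))"
  using sums_split_initial_segment[OF log_sums[OF assms], of "n+1"]
  by (simp add: add.assoc)

lemma ylny:
  fixes y :: real assumes "0 < y" "y \<le> 1"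
  shows "y * (- ln y) \<le> exp (-1)"
proof -
  have "ln (1 / (exp 1 * y)) \<le> 1 / (exp 1 * y) - 1"
    using assms by (intro ln_le_minus_one) simp
  moreover have "ln (1 / (exp 1 * y)) = - 1 - ln y"
    using assms by (simp add: ln_div ln_mult)
  ultimately have "- ln y \<le> 1 / (exp 1 * y)" by simp
  then have "y * (- ln y) \<le> y * (1 / (exp 1 * y))"
    using assms by (intro mult_left_mono) auto
  also have "\<dots> = exp (-1)" using assms by (simp add: exp_minus field_simps)
  finally show ?thesis .
qed

lemma tail_bound:
  fixes r :: real and n :: nat
  assumes n: "n \<ge> 1" and r: "0 \<le> r" "r < 1"
  shows "(\<Sum>j. r ^ (j + n + 1) / real (j + n + 1)) < exp (-1) / ((real n + 1) * (1 - r))"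
proof -
  define N where "N = n + 1"
  have N2: "N \<ge> 2" using n by (simp add: N_def)
  define a where "a k = r ^ k / real k" for k
  define b where "b k = r ^ k / (real N * real (k div N))" for k
  define x where "x = r ^ N"
  define S where "S = (\<Sum>i<N. r ^ i)"
  define \<delta> where "\<delta> = b (N+1) - a (N+1)"
  have x: "0 \<le> x" "x < 1" using r N2 by (auto simp: x_def intro: power_less_one_iff[THEN iffD2])
  have ab: "a k \<le> b k" if "N \<le> k" for k
  proof -
    have d: "k div N \<ge> 1" using that N2 by (metis One_nat_def div_greater_zero_iff le_less_trans less_one not_le zero_less_numeral Suc_leI)
    have "real N * real (k div N) \<le> real k"
      by (metis div_times_less_eq_dividend mult.commute of_nat_le_iff of_nat_mult)
    moreover have "0 < real N * real (k div N)" using d N2 by simp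
    ultimately show ?thesis unfolding a_def b_def
      using r by (intro divide_left_mono) auto
  qed
  have bzero: "b k = 0" if "k < N" for k using that by (simp add: b_def)
  have Sx: "S * (1 - r) = 1 - x" unfolding S_def x_def
    by (metis one_diff_power_eq mult.commute)
  have Spos: "S > 0" unfolding S_def using N2 r
    by (intro sum_pos2[where i=0]) auto
  have blocks: "(\<Sum>k<M*N. b k) = (\<Sum>j<M. x ^ j / real j) * S / real N" for M
  proof -
    have "(\<Sum>k<M*N. b k) = (\<Sum>j<M. \<Sum>k\<in>{j*N..<j*N+N}. b k)"
      by (rule sum.nat_group[symmetric])
    also have "\<dots> = (\<Sum>j<M. x ^ j / real j * S / real N)"
    proof (intro sum.cong refl)
      fix j assume "j \<in> {..<M}"
      have "(\<Sum>k\<in>{j*N..<j*N+N}. b k) = (\<Sum>i<N. b (j*N + i))"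
        using sum.shift_bounds_nat_ivl[of b 0 "j*N" N] by (simp add: atLeast0LessThan add.commute)
      also have "\<dots> = (\<Sum>i<N. r ^ (j*N) * r ^ i / (real N * real j))"
        using N2 by (intro sum.cong refl) (simp add: b_def power_add)
      also have "\<dots> = x ^ j / real j * S / real N"
        by (simp add: S_def x_def sum_divide_distrib[symmetric] sum_distrib_right[symmetric] power_mult mult.commute)
      finally show "(\<Sum>k\<in>{j*N..<j*N+N}. b k) = x ^ j / real j * S / real N" .
    qed
    also have "\<dots> = (\<Sum>j<M. x ^ j / real j) * S / real N"
      by (simp add: sum_divide_distrib sum_distrib_right)
    finally show ?thesis .
  qed
  have lnb: "(\<Sum>j<M. x ^ j / real j) \<le> - ln (1 - x)" for M
    using sum_le_suminf[OF sums_summable[OF log_sums[OF x]], of "{..<M}"] sums_unique[OF log_sums[OF x]]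
    using x by auto
  have bound: "(\<Sum>k<M*N. b k) \<le> exp (-1) / (real N * (1 - r))" for M
  proof -
    have "(\<Sum>k<M*N. b k) \<le> - ln (1 - x) * S / real N"
      unfolding blocks using Spos N2 lnb[of M] by (intro divide_right_mono mult_right_mono) auto
    also have "\<dots> = ((1 - x) * (- ln (1 - x))) / (real N * (1 - r))"
    proof -
      have "- ln (1 - x) * S / real N = (S * (1 - r)) * (- ln (1 - x)) / (real N * (1 - r))"
        using r N2 by (simp add: field_simps)
      then show ?thesis using Sx by simp
    qed
    also have "\<dots> \<le> exp (-1) / (real N * (1 - r))"
      using x r N2 by (intro divide_right_mono ylny) auto
    finally show ?thesis .
  qed
  have summ: "summable (\<lambda>j. r ^ (j + n + 1) / real (j + n + 1))"
    using sums_summable[OF tail_sums[OF r]] .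
  have part: "(\<Sum>j<L. r ^ (j + n + 1) / real (j + n + 1)) \<le> exp (-1) / (real N * (1 - r)) - \<delta>" for L
  proof -
    define M where "M = L + 2"
    have MN: "L + N \<le> M * N" "N + 1 < M * N" using N2 by (auto simp: M_def algebra_simps intro: trans_le_add2)
    have "(\<Sum>j<L. r ^ (j + n + 1) / real (j + n + 1)) = (\<Sum>k\<in>{N..<L+N}. a k)"
      using sum.shift_bounds_nat_ivl[of a 0 N L]
      by (simp add: a_def N_def atLeast0LessThan add.assoc add.commute)
    also have "\<dots> \<le> (\<Sum>k\<in>{N..<M*N}. a k)"
      using MN r by (intro sum_mono2) (auto simp: a_def)
    also have "\<dots> = (\<Sum>k\<in>{N..<M*N}. b k) - (\<Sum>k\<in>{N..<M*N}. b k - a k)"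
      by (simp add: sum_subtractf)
    also have "\<dots> \<le> (\<Sum>k\<in>{N..<M*N}. b k) - \<delta>"
    proof -
      have "\<delta> \<le> (\<Sum>k\<in>{N..<M*N}. b k - a k)"
        unfolding \<delta>_def using MN ab
        by (intro member_le_sum) auto
      then show ?thesis by simp
    qed
    also have "(\<Sum>k\<in>{N..<M*N}. b k) = (\<Sum>k<M*N. b k)"
    proof -
      have "(\<Sum>k<M*N. b k) = (\<Sum>k\<in>{..<N}. b k) + (\<Sum>k\<in>{N..<M*N}. b k)"
        using MN by (subst sum.atLeastLessThan_concat[of 0 N "M*N", symmetric, unfolded atLeast0LessThan]) (auto simp: M_def)
      then show ?thesis using bzero by simp
    qed
    finally show ?thesis using bound[of M] by simp
  qed
  have "(\<Sum>j. r ^ (j + n + 1) / real (j + n + 1)) \<le> exp (-1) / (real N * (1 - r)) - \<delta>"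
    using suminf_le_const[OF summ part] .
  moreover have "\<delta> \<ge> 0" unfolding \<delta>_def using ab[of "N+1"] by simp
  moreover have "\<delta> > 0" if "r > 0"
  proof -
    have "real N < real (N + 1)" by simp
    then have "r ^ (N+1) / real (N+1) < r ^ (N+1) / real N"
      using that N2 by (intro divide_strict_left_mono) auto
    moreover have "Suc N div N = 1" using N2
    proof -
      have "Suc N = 1 + N" by simp
      then have "Suc N div N = 1 div N + 1" using N2 by (simp only: div_add_self2)
      moreover have "1 div N = 0" using N2 by simp
      ultimately show ?thesis by simp
    qed
    ultimately show ?thesis using N2 by (simp add: \<delta>_def a_def b_def)
  qed
  moreover have "(\<Sum>j. r ^ (j + n + 1) / real (j + n + 1)) = 0" if "r = 0"
    using that by simp
  moreover have "exp (-1) / (real N * (1 - r)) > 0" using r N2 by simp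
  ultimately show ?thesis unfolding N_def using r
    by (cases "r = 0") (auto simp: add.commute)
qed

theorem proposition10:
  fixes n :: nat and z :: complex
  assumes "n \<ge> 1" and "norm z < 1"
  shows "norm (R n z) < m_bound ((real n + 1) * (1 - norm z))"
proof -
  define r where "r = norm z"
  have r: "0 \<le> r" "r < 1" using assms by (auto simp: r_def)
  define F where "F t = (\<Sum>j. t ^ (j + n + 1) / real (j + n + 1))" for t :: real
  define P where "P t = (\<Sum>k<n+1. t ^ k / real k)" for t :: real
  have FP: "F t = - ln (1 - t) - P t" if "0 \<le> t" "t < 1" for t
    unfolding F_def P_def using sums_unique[OF tail_sums[OF that]] by simp
  have FB: "F t < exp (-1) / ((real n + 1) * (1 - t))" if "0 \<le> t" "t < 1" for t
    unfolding F_def using tail_bound[OF assms(1) that] .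
  have normeq: "(\<lambda>j. norm (z ^ (j + n + 1) / of_nat (j + n + 1))) = (\<lambda>j. r ^ (j + n + 1) / real (j + n + 1))"
  proof
    fix j
    have "norm (of_nat (j + n + 1) :: complex) = real (j + n + 1)" by (rule norm_of_nat)
    then show "norm (z ^ (j + n + 1) / of_nat (j + n + 1)) = r ^ (j + n + 1) / real (j + n + 1)"
      by (simp only: r_def norm_divide norm_power)
  qed
  have "norm (R n z) \<le> F r"
    unfolding R_def F_def
    using summable_norm[of "\<lambda>j. z ^ (j + n + 1) / of_nat (j + n + 1)"] normeq
      sums_summable[OF tail_sums[OF r, of n]] by simp
  define p where "p = (real n + 1) * (1 - r)"
  have ppos: "p > 0" using r by (simp add: p_def)
  show ?thesis
  proof (cases "p \<ge> exp (-1)")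
    case True
    have "F r < 1 / (exp 1 * p)"
      using FB[OF r] by (simp add: p_def exp_minus field_simps)
    then show ?thesis using True \<open>norm (R n z) \<le> F r\<close> by (simp add: m_bound_def r_def p_def)
  next
    case False
    define r0 where "r0 = 1 - exp (-1) / (real n + 1)"
    have e1: "exp (-1::real) < 1" by simp
    have r0: "0 \<le> r0" "r0 < 1" unfolding r0_def using e1 by (auto simp: field_simps intro: order.trans[OF less_imp_le[OF e1]])
    have "1 - r < exp (-1) / (real n + 1)" using False by (simp add: p_def field_simps)
    then have r0r: "r0 < r" by (simp add: r0_def)
    have Pmono: "P r0 < P r"
      unfolding P_def
    proof (rule sum_strict_mono_ex1)
      show "\<forall>k\<in>{..<n+1}. r0 ^ k / real k \<le> r ^ k / real k"
        using r0 r0r by (auto intro!: divide_right_mono power_mono)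
      show "\<exists>k\<in>{..<n+1}. r0 ^ k / real k < r ^ k / real k"
        using assms(1) r0r by (intro bexI[of _ 1]) auto
    qed simp
    have "F r0 < 1"
      using FB[OF r0] by (simp add: r0_def)
    moreover have "- ln (1 - r0) = 1 + ln (real n + 1)"
      by (simp add: r0_def ln_div)
    ultimately have "P r0 > ln (real n + 1)" using FP[OF r0] by simp
    then have "F r < - ln (1 - r) - ln (real n + 1)" using FP[OF r] Pmono by simp
    also have "\<dots> = - ln p" using r by (simp add: p_def ln_mult)
    also have "\<dots> = \<bar>ln p\<bar>"
    proof -
      have "p < 1" using False e1 by linarith
      then show ?thesis using ppos by simp
    qed
    finally show ?thesis using False \<open>norm (R n z) \<le> F r\<close> by (simp add: m_bound_def r_def p_def)
  qed
qed

end
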